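(* For any term $t$, scalar $\alpha$, type $T$ and context $\Gamma$ of the Scalar type system: if $\Gamma\vdash\alpha.t:T$ then there exist a unit type $U$ and a scalar $\gamma\in\mathcal S$ such that $T\equiv\alpha.\gamma.U$.
   Context: Fix a commutative ring $(\mathcal{S},+,\times)$. Terms: $t,r ::= b \mid (t)\,r \mid \mathbf{0} \mid \alpha.t \mid t+r$, basis terms $b ::= x \mid \lambda x\,t$, modulo associativity and commutativity of $+$. Types: $T ::= U \mid \forall X.T \mid \alpha.T \mid \overline{0}$; unit types: $U ::= X \mid U\to T \mid \forall X.U$. Type variables are only substituted by unit types; $(\alpha.T)[U/X]=\alpha.T[U/X]$. Type equivalence $\equiv$ is the least congruence with $\alpha.\overline0\equiv\overline0$, $0.T\equiv\overline0$, $1.T\equiv T$, $\alpha.(\beta.T)\equiv(\alpha\times\beta).T$, $\forall X.\alpha.T\equiv\alpha.\forall X.T$. A context is a set of distinct term variables with unit types. Typing rules: (ax) $\Gamma,x:U\vdash x:U$; ($\equiv$) from $\Gamma\vdash t:T$ and $T\equiv S$ infer $\Gamma\vdash t:S$; ($\to_E$) from $\Gamma\vdash t:\alpha.(U\to T)$ and $\Gamma\vdash r:\beta.U$ infer $\Gamma\vdash (t)\,r:(\alpha\times\beta).T$; ($\to_I$) from $\Gamma,x:U\vdash t:T$ infer $\Gamma\vdash\lambda x\,t:U\to T$; ($\forall_E$) from $\Gamma\vdash t:\forall X.T$ infer $\Gamma\vdash t:T[U/X]$, $U$ unit; ($\forall_I$) from $\Gamma\vdash t:T$ with $X$ not free in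 $\Gamma$ infer $\Gamma\vdash t:\forall X.T$; ($ax_{\overline0}$) $\Gamma\vdash\mathbf 0:\overline0$; ($+_I$) from $\Gamma\vdash t:\alpha.T$ and $\Gamma\vdash r:\beta.T$ infer $\Gamma\vdash t+r:(\alpha+\beta).T$; ($s_I$) from $\Gamma\vdash t:T$ infer $\Gamma\vdash\alpha.t:\alpha.T$. *)

theory Defs
  imports Main
begin

datatype 's trm =
    Var nat
  | Lam "'s trm"
  | App "'s trm" "'s trm"
  | TmZero
  | Scal 's "'s trm"
  | Plus "'s trm" "'s trm"

inductive tac :: "'s trm \<Rightarrow> 's trm \<Rightarrow> bool" where
  tac_refl: "tac t t"
| tac_sym: "tac t r \<Longrightarrow> tac r t"
| tac_trans: "tac t r \<Longrightarrow> tac r s \<Longrightarrow> tac t s"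
| tac_comm: "tac (Plus t r) (Plus r t)"
| tac_assoc: "tac (Plus (Plus t r) s) (Plus t (Plus r s))"
| tac_Lam: "tac t t' \<Longrightarrow> tac (Lam t) (Lam t')"
| tac_App: "tac t t' \<Longrightarrow> tac r r' \<Longrightarrow> tac (App t r) (App t' r')"
| tac_Scal: "tac t t' \<Longrightarrow> tac (Scal a t) (Scal a t')"
| tac_Plus: "tac t t' \<Longrightarrow> tac r r' \<Longrightarrow> tac (Plus t r) (Plus t' r')"

text \<open>Types, with de Bruijn indices for type variables (TAll binds index 0).\<close>
datatype 's sty =
    TVar nat
  | Arr "'s sty" "'s sty"
  | TAll "'s sty"
  | TSc 's "'s sty"
  | TZero

fun is_unit :: "'s sty \<Rightarrow> bool" and wf_typ :: "'s sty \<Rightarrow> bool" where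
  "is_unit (TVar n) = True"
| "is_unit (Arr A B) = (is_unit A \<and> wf_typ B)"
| "is_unit (TAll A) = is_unit A"
| "is_unit (TSc a A) = False"
| "is_unit TZero = False"
| "wf_typ (TVar n) = True"
| "wf_typ (Arr A B) = (is_unit A \<and> wf_typ B)"
| "wf_typ (TAll A) = wf_typ A"
| "wf_typ (TSc a A) = wf_typ A"
| "wf_typ TZero = True"

fun lift :: "nat \<Rightarrow> 's sty \<Rightarrow> 's sty" where
  "lift k (TVar i) = (if i < k then TVar i else TVar (Suc i))"
| "lift k (Arr A B) = Arr (lift k A) (lift k B)"
| "lift k (TAll A) = TAll (lift (Suc k) A)"
| "lift k (TSc a A) = TSc a (lift k A)"
| "lift k TZero = TZero"

text \<open>subst k U T = T[U/k] (capture-avoiding, de Bruijn).\<close>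
fun subst :: "nat \<Rightarrow> 's sty \<Rightarrow> 's sty \<Rightarrow> 's sty" where
  "subst k U (TVar i) = (if i < k then TVar i else if i = k then U else TVar (i - 1))"
| "subst k U (Arr A B) = Arr (subst k U A) (subst k U B)"
| "subst k U (TAll A) = TAll (subst (Suc k) (lift 0 U) A)"
| "subst k U (TSc a A) = TSc a (subst k U A)"
| "subst k U TZero = TZero"

inductive teq :: "'s::comm_ring_1 sty \<Rightarrow> 's sty \<Rightarrow> bool" where
  teq_refl: "wf_typ T \<Longrightarrow> teq T T"
| teq_sym: "teq T S \<Longrightarrow> teq S T"
| teq_trans: "teq T S \<Longrightarrow> teq S R \<Longrightarrow> teq T R"
| teq_sc_zero: "teq (TSc a TZero) TZero"
| teq_zero_sc: "wf_typ T \<Longrightarrow> teq (TSc 0 T) TZero"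
| teq_one: "wf_typ T \<Longrightarrow> teq (TSc 1 T) T"
| teq_sc_sc: "wf_typ T \<Longrightarrow> teq (TSc a (TSc b T)) (TSc (a * b) T)"
| teq_all_sc: "wf_typ T \<Longrightarrow> teq (TAll (TSc a T)) (TSc a (TAll T))"
| teq_Arr: "teq A A' \<Longrightarrow> is_unit A \<Longrightarrow> is_unit A' \<Longrightarrow> teq B B' \<Longrightarrow> teq (Arr A B) (Arr A' B')"
| teq_All: "teq A A' \<Longrightarrow> teq (TAll A) (TAll A')"
| teq_Sc: "teq A A' \<Longrightarrow> teq (TSc a A) (TSc a A')"

text \<open>Typing judgement; contexts are lists of unit types indexed by de Bruijn indices.\<close>
inductive typing :: "'s::comm_ring_1 sty list \<Rightarrow> 's trm \<Rightarrow> 's sty \<Rightarrow> bool" where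
  ty_ax: "i < length \<Gamma> \<Longrightarrow> typing \<Gamma> (Var i) (\<Gamma> ! i)"
| ty_equiv: "typing \<Gamma> t T \<Longrightarrow> teq T S \<Longrightarrow> typing \<Gamma> t S"
| ty_arrE: "typing \<Gamma> t (TSc a (Arr U T)) \<Longrightarrow> typing \<Gamma> r (TSc b U)
            \<Longrightarrow> typing \<Gamma> (App t r) (TSc (a * b) T)"
| ty_arrI: "is_unit U \<Longrightarrow> typing (U # \<Gamma>) t T \<Longrightarrow> typing \<Gamma> (Lam t) (Arr U T)"
| ty_allE: "typing \<Gamma> t (TAll T) \<Longrightarrow> is_unit U \<Longrightarrow> typing \<Gamma> t (subst 0 U T)"
| ty_allI: "typing (map (lift 0) \<Gamma>) t T \<Longrightarrow> typing \<Gamma> t (TAll T)"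
| ty_zero: "typing \<Gamma> TmZero TZero"
| ty_plusI: "typing \<Gamma> t (TSc a T) \<Longrightarrow> typing \<Gamma> r (TSc b T)
            \<Longrightarrow> typing \<Gamma> (Plus t r) (TSc (a + b) T)"
| ty_sI: "typing \<Gamma> t T \<Longrightarrow> typing \<Gamma> (Scal a t) (TSc a T)"
| ty_ac: "typing \<Gamma> t T \<Longrightarrow> tac t t' \<Longrightarrow> typing \<Gamma> t' T"

end

theory Submission
  imports Defs
begin

datatype 's cu = CV nat | CA "'s cu" "'s ct" | CAll "'s cu"
and 's ct = CZ | CS 's "'s cu"

definition mk :: "'s::comm_ring_1 \<Rightarrow> 's cu \<Rightarrow> 's ct" where
  "mk c u = (if c = 0 then CZ else CS c u)"

fun smul :: "'s::comm_ring_1 \<Rightarrow> 's ct \<Rightarrow> 's ct" where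
  "smul a CZ = CZ"
| "smul a (CS c u) = mk (a*c) u"

fun allc :: "'s ct \<Rightarrow> 's ct" where
  "allc CZ = CZ"
| "allc (CS c u) = CS c (CAll u)"

fun canu :: "'s::comm_ring_1 sty \<Rightarrow> 's cu" and cant :: "'s::comm_ring_1 sty \<Rightarrow> 's ct" where
  "canu (TVar n) = CV n"
| "canu (Arr A B) = CA (canu A) (cant B)"
| "canu (TAll A) = CAll (canu A)"
| "canu (TSc a A) = CV 0"
| "canu TZero = CV 0"
| "cant (TVar n) = mk 1 (CV n)"
| "cant (Arr A B) = mk 1 (CA (canu A) (cant B))"
| "cant (TAll A) = allc (cant A)"
| "cant (TSc a A) = smul a (cant A)"
| "cant TZero = CZ"

lemma allc_mk: "allc (mk c u) = mk c (CAll u)"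
  by (simp add: mk_def)

lemma smul_mk: "smul a (mk c u) = mk (a*c) u"
  by (simp add: mk_def)

lemma unit_cant: "is_unit A \<Longrightarrow> cant A = mk 1 (canu A)"
  by (induction A) (auto simp: allc_mk)

lemma cant_nz: "cant T = CS c u \<Longrightarrow> c \<noteq> 0"
proof (induction T arbitrary: c u)
  case (TAll T)
  then show ?case by (cases "cant T") auto
next
  case (TSc a T)
  then show ?case by (cases "cant T") (auto simp: mk_def split: if_splits)
qed (auto simp: mk_def split: if_splits)

lemma smul_smul: "smul a (smul b x) = smul (a*b) x"
  by (cases x) (auto simp: mk_def mult.assoc)

lemma allc_smul: "allc (smul a x) = smul a (allc x)"
  by (cases x) (auto simp: mk_def)

lemma smul_zero: "smul 0 x = CZ"
  by (cases x) (auto simp: mk_def)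

lemma teq_cant: "teq A B \<Longrightarrow> cant A = cant B"
proof (induction rule: teq.induct)
  case (teq_one T)
  then show ?case using cant_nz[of T] by (cases "cant T") (auto simp: mk_def)
next
  case (teq_sc_sc T a b)
  then show ?case by (simp add: smul_smul)
next
  case (teq_all_sc T a)
  then show ?case by (simp add: allc_smul)
next
  case (teq_Arr A A' B B')
  show ?case
  proof (cases "(1::'a) = 0")
    case True
    then show ?thesis by (simp add: mk_def)
  next
    case False
    have "mk 1 (canu A) = mk 1 (canu A')"
      using teq_Arr unit_cant by metis
    then have "canu A = canu A'" using False by (simp add: mk_def)
    then show ?thesis using teq_Arr by simp
  qed
qed (auto simp: smul_zero)

lemma unit_wf: "is_unit T \<Longrightarrow> wf_typ T"
  by (induction T) auto

lemma lift_ok: "(is_unit T \<longrightarrow> is_unit (lift k T)) \<and> (wf_typ T \<longrightarrow> wf_typ (lift k T))"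
  by (induction T arbitrary: k) auto

lemma subst_ok: "is_unit V \<Longrightarrow>
  (is_unit T \<longrightarrow> is_unit (subst k V T)) \<and> (wf_typ T \<longrightarrow> wf_typ (subst k V T))"
proof (induction T arbitrary: k V)
  case (TAll T)
  then show ?case using lift_ok by auto
qed (auto simp: unit_wf)

lemma teq_wf: "teq A B \<Longrightarrow> wf_typ A \<and> wf_typ B"
  by (induction rule: teq.induct) (auto simp: unit_wf)

lemma teq_subst: "teq A B \<Longrightarrow> is_unit V \<Longrightarrow> teq (subst k V A) (subst k V B)"
proof (induction arbitrary: k V rule: teq.induct)
  case (teq_refl T)
  then show ?case using subst_ok by (metis teq.teq_refl)
next
  case (teq_sym T S)
  then show ?case by (metis teq.teq_sym)
next
  case (teq_trans T S R)
  then show ?case by (metis teq.teq_trans)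
next
  case (teq_sc_zero a)
  then show ?case by (simp add: teq.teq_sc_zero)
next
  case (teq_zero_sc T)
  then have "wf_typ (subst k V T)" using subst_ok by blast
  then show ?case by (simp add: teq.teq_zero_sc)
next
  case (teq_one T)
  then have "wf_typ (subst k V T)" using subst_ok by blast
  then show ?case by (simp add: teq.teq_one)
next
  case (teq_sc_sc T a b)
  then have "wf_typ (subst k V T)" using subst_ok by blast
  then show ?case by (simp add: teq.teq_sc_sc)
next
  case (teq_all_sc T a)
  then have "wf_typ (subst (Suc k) (lift 0 V) T)" using subst_ok lift_ok by blast
  then show ?case by (simp add: teq.teq_all_sc)
next
  case (teq_Arr A A' B B')
  then have "is_unit (subst k V A)" "is_unit (subst k V A')" using subst_ok by blast+
  then show ?case using teq_Arr by (simp add: teq.teq_Arr)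
next
  case (teq_All A A')
  then have "is_unit (lift 0 V)" using lift_ok by blast
  then show ?case using teq_All by (simp add: teq.teq_All)
next
  case (teq_Sc A A' a)
  then show ?case by (simp add: teq.teq_Sc)
qed

lemma wf_decomp: "wf_typ (T::'s::comm_ring_1 sty) \<Longrightarrow> \<exists>\<gamma> U. is_unit U \<and> teq T (TSc \<gamma> U)"
proof (induction T)
  case (TVar n)
  then show ?case by (intro exI[of _ 1] exI[of _ "TVar n"]) (auto intro!: teq_sym[OF teq_one])
next
  case (Arr A B)
  then show ?case by (intro exI[of _ 1] exI[of _ "Arr A B"]) (auto intro!: teq_sym[OF teq_one])
next
  case (TAll T)
  then obtain \<gamma> U where U: "is_unit U" "teq T (TSc \<gamma> U)" by auto
  have "teq (TAll T) (TAll (TSc \<gamma> U))" using U by (simp add: teq_All)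
  moreover have "teq (TAll (TSc \<gamma> U)) (TSc \<gamma> (TAll U))" using U by (simp add: unit_wf teq_all_sc)
  ultimately have "teq (TAll T) (TSc \<gamma> (TAll U))" by (rule teq_trans)
  moreover have "is_unit (TAll U)" using U by simp
  ultimately show ?case by blast
next
  case (TSc a T)
  then obtain \<gamma> U where U: "is_unit U" "teq T (TSc \<gamma> U)" by auto
  have "teq (TSc a T) (TSc a (TSc \<gamma> U))" using U by (simp add: teq_Sc)
  moreover have "teq (TSc a (TSc \<gamma> U)) (TSc (a*\<gamma>) U)" using U by (simp add: unit_wf teq_sc_sc)
  ultimately have "teq (TSc a T) (TSc (a*\<gamma>) U)" by (rule teq_trans)
  then show ?case using U by auto
next
  case TZero
  have "teq TZero (TSc 0 (TVar 0 :: 's sty))" by (rule teq_sym, rule teq_zero_sc) simp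
  then show ?case by (intro exI[of _ 0] exI[of _ "TVar 0"]) auto
qed

lemma typing_wf: "typing \<Gamma> t T \<Longrightarrow> \<forall>V\<in>set \<Gamma>. is_unit V \<Longrightarrow> wf_typ T"
proof (induction rule: typing.induct)
  case (ty_ax i \<Gamma>)
  then show ?case using unit_wf nth_mem by blast
next
  case (ty_equiv \<Gamma> t T S)
  then show ?case using teq_wf by blast
next
  case (ty_allE \<Gamma> t T U)
  then show ?case using subst_ok by auto
next
  case (ty_allI \<Gamma> t T)
  then show ?case using lift_ok by auto
qed auto

lemma tac_scal: "tac s s' \<Longrightarrow> (\<exists>t. s = Scal a t) = (\<exists>t. s' = Scal a t)"
  by (induction rule: tac.induct) auto

lemma mk_eq: "mk c u = mk d v \<Longrightarrow> c = d \<or> (c = 0 \<and> d = 0)"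
  by (auto simp: mk_def split: if_splits)

lemma main_inv:
  "typing \<Gamma> s T \<Longrightarrow> \<forall>V\<in>set \<Gamma>. is_unit V \<Longrightarrow> (\<exists>t. s = Scal \<alpha> t) \<Longrightarrow>
   \<exists>U \<gamma>. is_unit U \<and> teq T (TSc \<alpha> (TSc \<gamma> U))"
proof (induction rule: typing.induct)
  case (ty_equiv \<Gamma> t T S)
  then show ?case by (blast intro: teq_sym teq_trans)
next
  case (ty_allE \<Gamma> t T V)
  then obtain U' \<delta> where U': "is_unit U'" "teq (TAll T) (TSc \<alpha> (TSc \<delta> U'))" by auto
  have "wf_typ T" using U' teq_wf by fastforce
  then obtain \<gamma> U where U: "is_unit U" "teq T (TSc \<gamma> U)" using wf_decomp by blast
  have "cant (TAll T) = cant (TSc \<alpha> (TSc \<delta> U'))" using U' teq_cant by blast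
  then have "mk \<gamma> (CAll (canu U)) = mk (\<alpha>*\<delta>) (canu U')"
    using U U' teq_cant[OF U(2)] by (simp add: unit_cant smul_mk allc_mk)
  then have g: "\<gamma> = \<alpha>*\<delta> \<or> (\<gamma> = 0 \<and> \<alpha>*\<delta> = 0)" by (rule mk_eq)
  define W where "W = subst 0 V U"
  have W: "is_unit W" using subst_ok U ty_allE W_def by blast
  have s: "teq (subst 0 V T) (TSc \<gamma> W)" using teq_subst[OF U(2) ty_allE(2)] W_def by simp
  show ?case
  proof (cases "\<gamma> = \<alpha>*\<delta>")
    case True
    have "teq (TSc \<alpha> (TSc \<delta> W)) (TSc \<gamma> W)" using True W by (simp add: unit_wf teq_sc_sc)
    then show ?thesis using s W by (blast intro: teq_sym teq_trans)
  next
    case False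
    then have g0: "\<gamma> = 0" using g by auto
    have a: "teq (TSc \<gamma> W) TZero" using g0 W by (simp add: unit_wf teq_zero_sc)
    have "teq (TSc \<alpha> (TSc 0 W)) (TSc \<alpha> TZero)" using W by (simp add: unit_wf teq_Sc teq_zero_sc)
    then have "teq (TSc \<alpha> (TSc 0 W)) TZero" by (blast intro: teq_trans teq_sc_zero)
    then show ?thesis using s a W by (blast intro: teq_sym teq_trans)
  qed
next
  case (ty_allI \<Gamma> t T)
  have "\<forall>V\<in>set (map (lift 0) \<Gamma>). is_unit V" using ty_allI lift_ok by auto
  then obtain U \<gamma> where U: "is_unit U" "teq T (TSc \<alpha> (TSc \<gamma> U))" using ty_allI by blast
  have "teq (TAll T) (TAll (TSc \<alpha> (TSc \<gamma> U)))" using U by (simp add: teq_All)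
  moreover have "teq (TAll (TSc \<alpha> (TSc \<gamma> U))) (TSc \<alpha> (TAll (TSc \<gamma> U)))"
    using U by (simp add: unit_wf teq_all_sc)
  moreover have "teq (TSc \<alpha> (TAll (TSc \<gamma> U))) (TSc \<alpha> (TSc \<gamma> (TAll U)))"
    using U by (simp add: unit_wf teq_all_sc teq_Sc)
  ultimately have "teq (TAll T) (TSc \<alpha> (TSc \<gamma> (TAll U)))" by (meson teq_trans)
  moreover have "is_unit (TAll U)" using U by simp
  ultimately show ?case by blast
next
  case (ty_sI \<Gamma> t T a)
  then have "wf_typ T" "a = \<alpha>" using typing_wf by auto
  then obtain \<gamma> U where U: "is_unit U" "teq T (TSc \<gamma> U)" using wf_decomp by blast
  then show ?case using \<open>a = \<alpha>\<close> by (auto intro: teq_Sc)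
next
  case (ty_ac \<Gamma> t T t')
  then have "\<exists>u. t = Scal \<alpha> u" using tac_scal[OF ty_ac(2), of \<alpha>] by simp
  then show ?case using ty_ac by simp
qed simp_all

theorem mainTheorem13:
  fixes \<Gamma> :: "'s::comm_ring_1 sty list" and t :: "'s trm" and \<alpha> :: 's and T :: "'s sty"
  assumes "\<forall>V \<in> set \<Gamma>. is_unit V"
    and "typing \<Gamma> (Scal \<alpha> t) T"
  shows "\<exists>U \<gamma>. is_unit U \<and> teq T (TSc \<alpha> (TSc \<gamma> U))"
  using main_inv[OF assms(2) assms(1)] by blast

end
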